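(* In the standing setting, if the step size satisfies $\eta\le\frac{1}{\kappa^2C_W}$, then for every $t\ge 0$ (with $f_1=0$), $\|f_{t+1}\|_K^2\le M^2C_W\,\eta\, t$ almost surely.
   Context: Standing setting: $\rho$ probability on $\mathcal X\times\mathcal Y$, $\mathcal Y\subseteq\mathbb R$, $|y|\le M$ a.s.; $K$ measurable symmetric positive semi-definite kernel with $\kappa=\sup_x\sqrt{K(x,x)}<\infty$, RKHS $\mathcal H_K$ with norm $\|\cdot\|_K$, $K_x=K(x,\cdot)$. $W:[0,\infty)\to\mathbb R$ with $W'_+(0)>0$, $W'(s)>0$ for $s>0$, $C_W:=\sup_{s>0}|W'(s)|<\infty$. Online algorithm: $z_t=(x_t,y_t)$ i.i.d. from $\rho$, $\sigma>0$, constant step size $\eta>0$, $f_1=0$, $f_{t+1}=f_t-\eta W'(\xi_{t,\sigma})(f_t(x_t)-y_t)K_{x_t}$, $\xi_{t,\sigma}=(y_t-f_t(x_t))^2/\sigma^2$. *)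

theory Defs
  imports "HOL-Probability.Probability"
begin

text \<open>A coefficient list c (of length n) together with the sample path z represents
  the function  sum_{i<n} c!i * K_{x_{i+1}}  in H_K, where x_{i+1} = fst (z (i+1)).\<close>

definition kexp_eval :: "('x \<Rightarrow> 'x \<Rightarrow> real) \<Rightarrow> (nat \<Rightarrow> 'x \<times> real) \<Rightarrow> real list \<Rightarrow> 'x \<Rightarrow> real" where
  "kexp_eval K z c x = (\<Sum>i<length c. c ! i * K (fst (z (Suc i))) x)"

definition kexp_norm2 :: "('x \<Rightarrow> 'x \<Rightarrow> real) \<Rightarrow> (nat \<Rightarrow> 'x \<times> real) \<Rightarrow> real list \<Rightarrow> real" where
  "kexp_norm2 K z c = (\<Sum>i<length c. \<Sum>j<length c. c ! i * c ! j * K (fst (z (Suc i))) (fst (z (Suc j))))"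

text \<open>Coefficients of the online iterate: ol_coef K W' sigma eta z n represents f_{n+1}
  (so n = 0 gives f_1 = 0), with
  f_{t+1} = f_t - eta W'(xi_t) (f_t(x_t) - y_t) K_{x_t}, xi_t = (y_t - f_t(x_t))^2 / sigma^2.\<close>
primrec ol_coef :: "('x \<Rightarrow> 'x \<Rightarrow> real) \<Rightarrow> (real \<Rightarrow> real) \<Rightarrow> real \<Rightarrow> real \<Rightarrow> (nat \<Rightarrow> 'x \<times> real) \<Rightarrow> nat \<Rightarrow> real list" where
  "ol_coef K W' \<sigma> \<eta> z 0 = []"
| "ol_coef K W' \<sigma> \<eta> z (Suc n) =
     (let c = ol_coef K W' \<sigma> \<eta> z n;
          x = fst (z (Suc n)); y = snd (z (Suc n));
          ft = kexp_eval K z c x;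
          \<xi> = (y - ft)\<^sup>2 / \<sigma>\<^sup>2
      in c @ [- \<eta> * W' \<xi> * (ft - y)])"

definition kappa :: "'x measure \<Rightarrow> ('x \<Rightarrow> 'x \<Rightarrow> real) \<Rightarrow> real" where
  "kappa X K = (SUP x\<in>space X. sqrt (K x x))"

definition C_W :: "(real \<Rightarrow> real) \<Rightarrow> real" where
  "C_W W' = (SUP s\<in>{0<..}. \<bar>W' s\<bar>)"

end

theory Submission
  imports Defs
begin

lemma len_ol_coef: "length (ol_coef K W' \<sigma> \<eta> z n) = n"
  by (induction n) (simp_all add: Let_def)

lemma norm_snoc:
  assumes S: "\<And>i. i \<le> length c \<Longrightarrow> fst (z (Suc i)) \<in> S"
    and sym: "\<And>x x'. x \<in> S \<Longrightarrow> x' \<in> S \<Longrightarrow> K x x' = K x' x"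
  shows "kexp_norm2 K z (c @ [a]) = kexp_norm2 K z c
           + 2 * a * kexp_eval K z c (fst (z (Suc (length c))))
           + a\<^sup>2 * K (fst (z (Suc (length c)))) (fst (z (Suc (length c))))"
proof -
  let ?n = "length c"
  let ?x = "fst (z (Suc ?n))"
  let ?d = "c @ [a]"
  have e1: "\<And>i j. i < ?n \<Longrightarrow> j < ?n \<Longrightarrow> ?d ! i * ?d ! j * K (fst (z (Suc i))) (fst (z (Suc j)))
      = c ! i * c ! j * K (fst (z (Suc i))) (fst (z (Suc j)))"
    by (simp add: nth_append)
  have "kexp_norm2 K z ?d = (\<Sum>i<Suc ?n. \<Sum>j<Suc ?n. ?d ! i * ?d ! j * K (fst (z (Suc i))) (fst (z (Suc j))))"
    by (simp add: kexp_norm2_def)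
  also have "\<dots> = (\<Sum>i<?n. (\<Sum>j<?n. ?d ! i * ?d ! j * K (fst (z (Suc i))) (fst (z (Suc j))))
        + ?d ! i * a * K (fst (z (Suc i))) ?x)
      + ((\<Sum>j<?n. a * ?d ! j * K ?x (fst (z (Suc j)))) + a * a * K ?x ?x)"
    by (simp add: nth_append)
  also have "\<dots> = (\<Sum>i<?n. (\<Sum>j<?n. c ! i * c ! j * K (fst (z (Suc i))) (fst (z (Suc j))))
        + c ! i * a * K (fst (z (Suc i))) ?x)
      + ((\<Sum>j<?n. a * c ! j * K (fst (z (Suc j))) ?x) + a * a * K ?x ?x)"
  proof -
    have "\<And>j. j < ?n \<Longrightarrow> a * ?d ! j * K ?x (fst (z (Suc j))) = a * c ! j * K (fst (z (Suc j))) ?x"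
      using S sym by (simp add: nth_append)
    then show ?thesis using e1 by (intro arg_cong2[where f="(+)"] sum.cong refl) (auto simp: nth_append)
  qed
  also have "\<dots> = kexp_norm2 K z c + 2 * a * kexp_eval K z c ?x + a\<^sup>2 * K ?x ?x"
    by (simp add: kexp_norm2_def kexp_eval_def sum.distrib sum_distrib_left power2_eq_square
        algebra_simps)
  finally show ?thesis .
qed

lemma step_ineq:
  fixes a y w \<eta> k C M :: real
  assumes "0 \<le> w" "w \<le> C" "0 \<le> k" "\<eta> > 0" "\<eta> * w * k \<le> 1" "\<bar>y\<bar> \<le> M"
  shows "2 * (- \<eta> * w * (a - y)) * a + (- \<eta> * w * (a - y))\<^sup>2 * k \<le> M\<^sup>2 * C * \<eta>"
proof -
  have h1: "(- \<eta> * w * (a - y))\<^sup>2 * k = (\<eta> * w * (a - y)\<^sup>2) * (\<eta> * w * k)"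
    by (simp add: power2_eq_square algebra_simps)
  have h2: "(\<eta> * w * (a - y)\<^sup>2) * (\<eta> * w * k) \<le> \<eta> * w * (a - y)\<^sup>2"
    using assms by (intro mult_left_le) auto
  have h3: "2 * (- \<eta> * w * (a - y)) * a + \<eta> * w * (a - y)\<^sup>2 = \<eta> * w * (y\<^sup>2 - a\<^sup>2)"
    by (simp add: power2_eq_square algebra_simps)
  have h4: "\<eta> * w * (y\<^sup>2 - a\<^sup>2) \<le> \<eta> * w * y\<^sup>2"
    using assms by (intro mult_left_mono) auto
  have y2: "y\<^sup>2 \<le> M\<^sup>2" using assms(6) by (metis abs_ge_zero abs_le_square_iff order_trans abs_of_nonneg le_cases abs_le_D1 power2_abs abs_le_self_iff)
  have h5: "\<eta> * w * y\<^sup>2 \<le> \<eta> * C * M\<^sup>2"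
    using assms y2 by (intro mult_mono) auto
  have "M\<^sup>2 * C * \<eta> = \<eta> * C * M\<^sup>2" by simp
  then show ?thesis using h1 h2 h3 h4 h5 by linarith
qed

lemma det_bound:
  fixes z :: "nat \<Rightarrow> 'x \<times> real" and kk C M \<sigma> \<eta> :: real
  assumes zS: "\<And>i. i \<ge> 1 \<Longrightarrow> fst (z i) \<in> S"
    and zM: "\<And>i. i \<ge> 1 \<Longrightarrow> \<bar>snd (z i)\<bar> \<le> M"
    and sym: "\<And>x x'. x \<in> S \<Longrightarrow> x' \<in> S \<Longrightarrow> K x x' = K x' x"
    and Kd: "\<And>x. x \<in> S \<Longrightarrow> 0 \<le> K x x \<and> K x x \<le> kk"
    and Wb: "\<And>s. s > 0 \<Longrightarrow> 0 < W' s \<and> W' s \<le> C"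
    and sig: "\<sigma> > 0" and eta: "\<eta> > 0" and stp: "\<eta> * kk * C \<le> 1"
  shows "kexp_norm2 K z (ol_coef K W' \<sigma> \<eta> z n) \<le> M\<^sup>2 * C * \<eta> * real n"
proof (induction n)
  case 0
  then show ?case by (simp add: kexp_norm2_def)
next
  case (Suc n)
  define c where "c = ol_coef K W' \<sigma> \<eta> z n"
  define x where "x = fst (z (Suc n))"
  define y where "y = snd (z (Suc n))"
  define a where "a = kexp_eval K z c x"
  define w where "w = W' ((y - a)\<^sup>2 / \<sigma>\<^sup>2)"
  have lc: "length c = n" by (simp add: c_def len_ol_coef)
  have eq: "ol_coef K W' \<sigma> \<eta> z (Suc n) = c @ [- \<eta> * w * (a - y)]"
    by (simp add: c_def x_def y_def a_def w_def Let_def)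
  have xS: "x \<in> S" using zS x_def by simp
  have yM: "\<bar>y\<bar> \<le> M" using zM y_def by simp
  have nrm: "kexp_norm2 K z (c @ [- \<eta> * w * (a - y)]) = kexp_norm2 K z c
      + 2 * (- \<eta> * w * (a - y)) * a + (- \<eta> * w * (a - y))\<^sup>2 * K x x"
    using norm_snoc[of c z S K "- \<eta> * w * (a - y)"] zS sym lc
    by (simp add: a_def x_def algebra_simps)
  have inc: "2 * (- \<eta> * w * (a - y)) * a + (- \<eta> * w * (a - y))\<^sup>2 * K x x \<le> M\<^sup>2 * C * \<eta>"
  proof (cases "a = y")
    case True
    have "0 \<le> M" using yM by linarith
    moreover have "0 \<le> C" using Wb[of 1] by linarith
    ultimately show ?thesis using True eta by simp
  next
    case False
      then have "(y - a)\<^sup>2 / \<sigma>\<^sup>2 > 0" using sig by auto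
      then have wb: "0 < w" "w \<le> C" using Wb w_def by auto
      have k: "0 \<le> K x x" "K x x \<le> kk" using Kd xS by auto
      have "\<eta> * w * K x x \<le> \<eta> * C * kk"
        using wb k eta by (intro mult_mono) auto
      then have "\<eta> * w * K x x \<le> 1" using stp by (simp add: algebra_simps)
      then show ?thesis using step_ineq[of w C "K x x" \<eta> y M a] wb k eta yM by simp
  qed
  have IH: "kexp_norm2 K z c \<le> M\<^sup>2 * C * \<eta> * real n" using Suc.IH c_def by simp
  have r: "M\<^sup>2 * C * \<eta> * real (Suc n) = M\<^sup>2 * C * \<eta> * real n + M\<^sup>2 * C * \<eta>"
    by (simp add: algebra_simps)
  show ?case unfolding eq nrm r using IH inc by linarith
qed

theorem proposition2:
  fixes X :: "'x measure" and \<rho> :: "('x \<times> real) measure"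
    and P :: "'w measure" and Z :: "nat \<Rightarrow> 'w \<Rightarrow> 'x \<times> real"
    and K :: "'x \<Rightarrow> 'x \<Rightarrow> real"
    and W W' :: "real \<Rightarrow> real"
    and M \<sigma> \<eta> :: real and t :: nat
  assumes rho: "prob_space \<rho>" "sets \<rho> = sets (X \<Otimes>\<^sub>M borel)"
    and bounded_y: "AE z in \<rho>. \<bar>snd z\<bar> \<le> M"
    and K_meas: "case_prod K \<in> borel_measurable (X \<Otimes>\<^sub>M X)"
    and K_sym: "\<And>x x'. x \<in> space X \<Longrightarrow> x' \<in> space X \<Longrightarrow> K x x' = K x' x"
    and K_psd: "\<And>xs cs. set xs \<subseteq> space X \<Longrightarrow> length cs = length xs \<Longrightarrow>
                  0 \<le> (\<Sum>i<length xs. \<Sum>j<length xs. cs ! i * cs ! j * K (xs ! i) (xs ! j))"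
    and kappa_fin: "bdd_above ((\<lambda>x. sqrt (K x x)) ` space X)"
    and W_deriv0: "(W has_real_derivative W' 0) (at_right 0)" and W'0: "W' 0 > 0"
    and W_deriv: "\<And>s. s > 0 \<Longrightarrow> (W has_real_derivative W' s) (at s)"
    and W'_pos: "\<And>s. s > 0 \<Longrightarrow> W' s > 0"
    and CW_fin: "bdd_above ((\<lambda>s. \<bar>W' s\<bar>) ` {0<..})"
    and P: "prob_space P"
    and iid: "prob_space.indep_vars P (\<lambda>_. \<rho>) Z {1..}" "\<And>i. i \<ge> 1 \<Longrightarrow> distr P \<rho> (Z i) = \<rho>"
    and sigma: "\<sigma> > 0" and eta: "\<eta> > 0"
    and step: "\<eta> * (kappa X K)\<^sup>2 * C_W W' \<le> 1"
  shows "AE \<omega> in P. kexp_norm2 K (\<lambda>i. Z i \<omega>) (ol_coef K W' \<sigma> \<eta> (\<lambda>i. Z i \<omega>) t)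
                      \<le> M\<^sup>2 * C_W W' * \<eta> * real t"
proof -
  have meas: "\<And>i. i \<ge> 1 \<Longrightarrow> Z i \<in> measurable P \<rho>"
    using iid(1) unfolding prob_space.indep_vars_def2[OF P] by auto
  have sp: "space \<rho> = space X \<times> UNIV"
    using sets_eq_imp_space_eq[OF rho(2)] by (simp add: space_pair_measure)
  have AEi: "AE \<omega> in P. i \<ge> 1 \<longrightarrow> fst (Z i \<omega>) \<in> space X \<and> \<bar>snd (Z i \<omega>)\<bar> \<le> M" for i
  proof (cases "i \<ge> 1")
    case True
    have "AE z in distr P \<rho> (Z i). \<bar>snd z\<bar> \<le> M" unfolding iid(2)[OF True] by (rule bounded_y)
    then have a1: "AE \<omega> in P. \<bar>snd (Z i \<omega>)\<bar> \<le> M" by (rule AE_distrD[OF meas[OF True]])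
    have a2: "AE \<omega> in P. \<omega> \<in> space P" by (rule AE_space)
    show ?thesis using a1 a2
    proof eventually_elim
      case (elim \<omega>)
      then have "Z i \<omega> \<in> space \<rho>" using measurable_space[OF meas[OF True]] by blast
      then show ?case using elim sp by (auto simp: mem_Times_iff)
    qed
  qed simp
  have AEall: "AE \<omega> in P. \<forall>i. i \<ge> 1 \<longrightarrow> fst (Z i \<omega>) \<in> space X \<and> \<bar>snd (Z i \<omega>)\<bar> \<le> M"
    using AEi by (subst AE_all_countable) auto
  have Kd: "0 \<le> K x x \<and> K x x \<le> (kappa X K)\<^sup>2" if x: "x \<in> space X" for x
  proof
    show nn: "0 \<le> K x x" using K_psd[of "[x]" "[1]"] x by simp
    have "sqrt (K x x) \<le> kappa X K" unfolding kappa_def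
      using kappa_fin x by (intro cSUP_upper) auto
    then have "(sqrt (K x x))\<^sup>2 \<le> (kappa X K)\<^sup>2" using nn by (intro power_mono) auto
    then show "K x x \<le> (kappa X K)\<^sup>2" using nn by simp
  qed
  have Wb: "0 < W' s \<and> W' s \<le> C_W W'" if s: "s > 0" for s
  proof
    show "0 < W' s" using W'_pos s by simp
    have "\<bar>W' s\<bar> \<le> C_W W'" unfolding C_W_def using CW_fin s by (intro cSUP_upper) auto
    then show "W' s \<le> C_W W'" by simp
  qed
  show ?thesis using AEall
  proof eventually_elim
    case (elim \<omega>)
    show ?case
      by (rule det_bound[where S="space X" and kk="(kappa X K)\<^sup>2"])
         (use elim K_sym Kd Wb sigma eta step in auto)
  qed
qed

end
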